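(* Let $N\ge1$ and $L=\sum_{i=0}^N a_i(x)\partial_x^i$ with $a_i(x)=\sum_{j=0}^i a_{i,j}x^j$ complex polynomials, $a_0\equiv0$, and $a_i\equiv 0$ for $i>N$. Suppose there are complex numbers $\lambda_n$ ($n\ge0$, $\lambda_0=0$) and monic polynomials $P_n(x)=\sum_{i=0}^n b_{n,i}x^i$ of degree $n$ such that $\sum_{i=1}^N a_i(x)\partial_x^iP_n(x)=\lambda_nP_n(x)$ for all $n\ge0$, and assume $\lambda_n\notin\{0,\lambda_1,\ldots,\lambda_{n-1}\}$ for all $n\ge1$. Let $\delta_n^{(k)}=\sum_{i=k}^{n}\binom{n}{i}i!\,a_{i,i-k}$ for $0\le k\le n$. Then for every $n\ge0$ and $i=0,1,\ldots,n-1$, $$b_{n,i}=\sum_{(i_1,\ldots,i_k)\in E_n^{(i)}}\ \prod_{s=1}^k\frac{\delta^{(i_s)}_{i+i_1+\cdots+i_s}}{\lambda_n-\lambda_{i+i_1+\cdots+i_{s-1}}},$$ where $E_n^{(i)}=\{(i_1,\ldots,i_k): k\ge1,\ i_1,\ldots,i_k \text{ positive integers},\ i_1+\cdots+i_k=n-i\}$ and $i+i_1+\cdots+i_{s-1}$ is understood as $i$ when $s=1$.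
   Context: $\partial_x^i$ denotes the $i$-th derivative in $x$. Note $\delta^{(k)}_m=0$ whenever $k>N$, since then all $a_{i,i-k}$ with $i\ge k$ vanish. *)

theory Defs
  imports "HOL-Computational_Algebra.Polynomial"
begin

definition coeff_poly :: "(nat \<Rightarrow> nat \<Rightarrow> complex) \<Rightarrow> nat \<Rightarrow> complex poly" where
  "coeff_poly a i = (\<Sum>j\<le>i. monom (a i j) j)"

definition diff_op :: "nat \<Rightarrow> (nat \<Rightarrow> nat \<Rightarrow> complex) \<Rightarrow> complex poly \<Rightarrow> complex poly" where
  "diff_op N a p = (\<Sum>i=1..N. coeff_poly a i * (pderiv ^^ i) p)"

definition delta :: "(nat \<Rightarrow> nat \<Rightarrow> complex) \<Rightarrow> nat \<Rightarrow> nat \<Rightarrow> complex" where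
  "delta a n k = (\<Sum>i=k..n. of_nat (n choose i) * of_nat (fact i) * a i (i - k))"

definition compositions :: "nat \<Rightarrow> nat list set" where
  "compositions m = {xs. xs \<noteq> [] \<and> (\<forall>x\<in>set xs. 0 < x) \<and> sum_list xs = m}"

end

theory Submission imports Defs begin

lemma hp_monom: "(pderiv ^^ i) (monom c m) = monom (c * of_nat ((m choose i) * fact i)) (m - i)"
proof (induction i)
  case 0 then show ?case by simp
next
  case (Suc i)
  have e: "(m - i) * ((m choose i) * fact i) = (m choose Suc i) * fact (Suc i)"
  proof -
    have "(m - i) * (m choose i) = Suc i * (m choose Suc i)"
      by (metis binomial_absorb_comp binomial_absorption)
    then show ?thesis by (simp add: algebra_simps)
  qed
  have "(pderiv ^^ Suc i) (monom c m) = pderiv (monom (c * of_nat ((m choose i) * fact i)) (m - i))"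
    using Suc by simp
  also have "\<dots> = monom (of_nat (m - i) * (c * of_nat ((m choose i) * fact i))) (m - Suc i)"
    by (simp add: pderiv_monom)
  also have "of_nat (m - i) * (c * of_nat ((m choose i) * fact i)) = c * of_nat ((m choose Suc i) * fact (Suc i))"
    by (metis (no_types, lifting) e mult.left_commute of_nat_mult)
  finally show ?case .
qed

lemma coeff_monom_mult': "coeff (p * monom c n) k = (if k < n then 0 else c * coeff p (k - n))"
  by (metis coeff_monom_mult mult.commute)

lemma coeff_coeff_poly: "coeff (coeff_poly a i) j = (if j \<le> i then a i j else 0)"
  unfolding coeff_poly_def coeff_sum by (simp add: coeff_monom)

lemma diff_op_sum: "diff_op N a (sum f S) = (\<Sum>m\<in>S. diff_op N a (f m))"
  unfolding diff_op_def higher_pderiv_sum sum_distrib_left by (rule sum.swap)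

lemma coeff_diff_op_monom:
  assumes a0: "\<And>j. a 0 j = 0" and a_vanish: "\<And>i j. i > N \<Longrightarrow> a i j = 0"
  shows "coeff (diff_op N a (monom c m)) t = (if t \<le> m then c * delta a m (m - t) else 0)"
proof -
  define h where "h i = (if m - t \<le> i then c * of_nat ((m choose i) * fact i) * a i (i - (m - t)) else 0)" for i
  have L: "coeff (diff_op N a (monom c m)) t = (\<Sum>i=1..N. (if m - i \<le> t \<and> t - (m - i) \<le> i then
        c * of_nat ((m choose i) * fact i) * a i (t - (m - i)) else 0))"
    unfolding diff_op_def coeff_sum hp_monom
    by (intro sum.cong refl) (auto simp: coeff_monom_mult' coeff_coeff_poly)
  show ?thesis
  proof (cases "t \<le> m")
    case False
    have "coeff (diff_op N a (monom c m)) t = 0"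
      unfolding L by (intro sum.neutral) (use False in auto)
    then show ?thesis using False by simp
  next
    case True
    have "coeff (diff_op N a (monom c m)) t = sum h {1..N}"
      unfolding L h_def using True
    proof (intro sum.cong refl)
      fix i assume "i \<in> {1..N}"
      show "(if m - i \<le> t \<and> t - (m - i) \<le> i then
        c * of_nat ((m choose i) * fact i) * a i (t - (m - i)) else 0) =
        (if m - t \<le> i then c * of_nat ((m choose i) * fact i) * a i (i - (m - t)) else 0)"
        using True by (cases "i \<le> m") (auto simp: binomial_eq_0 add.commute)
    qed
    also have "\<dots> = sum h {..N+m}"
      by (intro sum.mono_neutral_left) (auto simp: h_def a0 a_vanish Suc_le_eq)
    also have "\<dots> = sum h {m-t..m}"
      by (intro sum.mono_neutral_right) (auto simp: h_def a_vanish)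
    also have "\<dots> = c * delta a m (m - t)"
      unfolding delta_def sum_distrib_left h_def by (intro sum.cong refl) (auto simp: algebra_simps)
    finally show ?thesis using True by simp
  qed
qed


lemma coeff_diff_op:
  assumes a0: "\<And>j. a 0 j = 0" and a_vanish: "\<And>i j. i > N \<Longrightarrow> a i j = 0"
  shows "coeff (diff_op N a p) t = (\<Sum>m\<le>degree p. coeff p m * (if t \<le> m then delta a m (m - t) else 0))"
proof -
  have "coeff (diff_op N a p) t = coeff (diff_op N a (\<Sum>m\<le>degree p. monom (coeff p m) m)) t"
    by (simp add: poly_as_sum_of_monoms)
  also have "\<dots> = (\<Sum>m\<le>degree p. coeff p m * (if t \<le> m then delta a m (m - t) else 0))"
    unfolding diff_op_sum coeff_sum
    by (intro sum.cong refl) (simp add: coeff_diff_op_monom[of a N, OF a0 a_vanish])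
  finally show ?thesis .
qed

definition Tm :: "(nat \<Rightarrow> nat \<Rightarrow> complex) \<Rightarrow> (nat \<Rightarrow> complex) \<Rightarrow> nat \<Rightarrow> nat \<Rightarrow> nat list \<Rightarrow> complex" where
  "Tm a lam n i xs = (\<Prod>s<length xs. delta a (i + sum_list (take (Suc s) xs)) (xs ! s)
                              / (lam n - lam (i + sum_list (take s xs))))"

lemma Tm_Nil: "Tm a lam n i [] = 1"
  by (simp add: Tm_def)

lemma Tm_Cons: "Tm a lam n i (x # xs) = delta a (i + x) x / (lam n - lam i) * Tm a lam n (i + x) xs"
  unfolding Tm_def by (simp add: prod.lessThan_Suc_shift add.assoc del: prod.lessThan_Suc)

lemma comp0: "compositions 0 = {}"
proof -
  have "xs = []" if "\<forall>x\<in>set xs. 0 < x" "sum_list xs = (0::nat)" for xs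
    using that by (cases xs) auto
  then show ?thesis unfolding compositions_def by blast
qed

lemma comp_split:
  assumes "m > 0"
  shows "compositions m = insert [m] (\<Union>x\<in>{1..<m}. (#) x ` compositions (m - x))"
proof (intro equalityI subsetI)
  fix xs assume xs: "xs \<in> compositions m"
  then obtain y ys where xy: "xs = y # ys" unfolding compositions_def by (cases xs) auto
  show "xs \<in> insert [m] (\<Union>x\<in>{1..<m}. (#) x ` compositions (m - x))"
  proof (cases "ys = []")
    case True then show ?thesis using xs xy by (auto simp: compositions_def)
  next
    case False
    then obtain z zs where "ys = z # zs" by (cases ys) auto
    then have "sum_list ys > 0" using xs xy by (auto simp: compositions_def)
    then have "y \<in> {1..<m}" "ys \<in> compositions (m - y)"
      using xs xy False by (auto simp: compositions_def)
    then show ?thesis using xy by auto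
  qed
next
  fix xs assume "xs \<in> insert [m] (\<Union>x\<in>{1..<m}. (#) x ` compositions (m - x))"
  then show "xs \<in> compositions m" using assms by (auto simp: compositions_def)
qed

lemma comp_finite: "finite (compositions m)"
proof (induction m rule: less_induct)
  case (less m)
  show ?case
  proof (cases "m = 0")
    case True then show ?thesis by (simp add: comp0)
  next
    case False
    then show ?thesis using less by (subst comp_split) auto
  qed
qed

lemma comp_sum:
  assumes "m > 0"
  shows "sum f (compositions m) = f [m] + (\<Sum>x\<in>{1..<m}. \<Sum>ys\<in>compositions (m - x). f (x # ys))"
proof -
  have nin: "[m] \<notin> (\<Union>x\<in>{1..<m}. (#) x ` compositions (m - x))"
    by (auto simp: comp0)
  have "sum f (compositions m) = f [m] + sum f (\<Union>x\<in>{1..<m}. (#) x ` compositions (m - x))"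
    using assms nin by (subst comp_split) (auto simp: comp_finite)
  also have "sum f (\<Union>x\<in>{1..<m}. (#) x ` compositions (m - x)) = (\<Sum>x\<in>{1..<m}. sum f ((#) x ` compositions (m - x)))"
    by (rule sum.UNION_disjoint) (auto simp: comp_finite)
  also have "\<dots> = (\<Sum>x\<in>{1..<m}. \<Sum>ys\<in>compositions (m - x). f (x # ys))"
    by (rule sum.cong[OF refl]) (simp add: sum.reindex)
  finally show ?thesis .
qed

theorem theorem2:
  fixes N :: nat
    and a :: "nat \<Rightarrow> nat \<Rightarrow> complex"
    and lam :: "nat \<Rightarrow> complex"
    and P :: "nat \<Rightarrow> complex poly"
  assumes N_ge: "N \<ge> 1"
    and a0: "\<And>j. a 0 j = 0"
    and a_vanish: "\<And>i j. i > N \<Longrightarrow> a i j = 0"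
    and lam0: "lam 0 = 0"
    and deg: "\<And>n. degree (P n) = n"
    and monic: "\<And>n. lead_coeff (P n) = 1"
    and eigen: "\<And>n. diff_op N a (P n) = smult (lam n) (P n)"
    and distinct: "\<And>n m. n \<ge> 1 \<Longrightarrow> m < n \<Longrightarrow> lam n \<noteq> lam m"
  shows "\<forall>n. \<forall>i<n. coeff (P n) i =
           (\<Sum>xs\<in>compositions (n - i).
              \<Prod>s<length xs. delta a (i + sum_list (take (Suc s) xs)) (xs ! s)
                              / (lam n - lam (i + sum_list (take s xs))))"
proof -
  have cd: "lam n * coeff (P n) t = (\<Sum>m\<le>n. coeff (P n) m * (if t \<le> m then delta a m (m - t) else 0))" for n t
  proof -
    have "lam n * coeff (P n) t = coeff (diff_op N a (P n)) t" using eigen[of n] by simp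
    also have "\<dots> = (\<Sum>m\<le>n. coeff (P n) m * (if t \<le> m then delta a m (m - t) else 0))"
      using coeff_diff_op[of a N "P n" t, OF a0 a_vanish] deg[of n] by simp
    finally show ?thesis .
  qed
  have lamd: "lam t = delta a t 0" for t
  proof -
    have "lam t = lam t * coeff (P t) t" using monic[of t] deg[of t] by simp
    also have "\<dots> = (\<Sum>m\<le>t. coeff (P t) m * (if t \<le> m then delta a m (m - t) else 0))" by (rule cd)
    also have "\<dots> = (\<Sum>m\<le>t. if m = t then delta a t 0 else 0)"
      using monic[of t] deg[of t] by (intro sum.cong refl) auto
    also have "\<dots> = delta a t 0" by simp
    finally show ?thesis .
  qed
  show ?thesis
  proof (rule allI)
    fix n
    define b where "b = coeff (P n)"
    define F where "F i = sum (Tm a lam n i) (compositions (n - i))" for i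
    have bn: "b n = 1" using monic[of n] deg[of n] by (simp add: b_def)
    have rec: "b i = delta a n (n - i) / (lam n - lam i)
       + (\<Sum>m\<in>{Suc i..<n}. b m * delta a m (m - i) / (lam n - lam i))" if "i < n" for i
    proof -
      have ne: "lam n - lam i \<noteq> 0" using distinct[of n i] that by simp
      have "lam n * b i = (\<Sum>m\<le>n. b m * (if i \<le> m then delta a m (m - i) else 0))"
        unfolding b_def by (rule cd)
      also have "\<dots> = (\<Sum>m\<in>{i..n}. b m * (if i \<le> m then delta a m (m - i) else 0))"
        by (intro sum.mono_neutral_right) auto
      also have "\<dots> = b i * delta a i 0 + (\<Sum>m\<in>{Suc i..n}. b m * delta a m (m - i))"
        using that by (subst sum.atLeast_Suc_atMost) auto
      also have "(\<Sum>m\<in>{Suc i..n}. b m * delta a m (m - i)) = delta a n (n - i) + (\<Sum>m\<in>{Suc i..<n}. b m * delta a m (m - i))"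
        proof -
        have "{Suc i..n} = insert n {Suc i..<n}" using that by auto
        then show ?thesis using bn by simp
      qed
      finally have "(lam n - lam i) * b i = delta a n (n - i) + (\<Sum>m\<in>{Suc i..<n}. b m * delta a m (m - i))"
        using lamd[of i] by (simp add: algebra_simps)
      then have "b i = (delta a n (n - i) + (\<Sum>m\<in>{Suc i..<n}. b m * delta a m (m - i))) / (lam n - lam i)"
        using ne by (simp add: eq_divide_eq mult.commute)
      then show ?thesis by (simp add: add_divide_distrib sum_divide_distrib)
    qed
    have Frec: "F i = delta a n (n - i) / (lam n - lam i)
       + (\<Sum>m\<in>{Suc i..<n}. F m * delta a m (m - i) / (lam n - lam i))" if "i < n" for i
    proof -
      have "F i = Tm a lam n i [n - i] + (\<Sum>x\<in>{1..<n - i}. \<Sum>ys\<in>compositions (n - i - x). Tm a lam n i (x # ys))"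
        unfolding F_def by (rule comp_sum) (use that in simp)
      also have "Tm a lam n i [n - i] = delta a n (n - i) / (lam n - lam i)"
        using that by (simp add: Tm_Cons Tm_Nil)
      also have "(\<Sum>x\<in>{1..<n - i}. \<Sum>ys\<in>compositions (n - i - x). Tm a lam n i (x # ys))
          = (\<Sum>x\<in>{1..<n - i}. F (i + x) * delta a (i + x) x / (lam n - lam i))"
        unfolding F_def Tm_Cons sum_distrib_left[symmetric]
        by (rule sum.cong[OF refl]) (simp add: algebra_simps)
      also have "\<dots> = (\<Sum>m\<in>{Suc i..<n}. F m * delta a m (m - i) / (lam n - lam i))"
        by (rule sum.reindex_bij_witness[of _ "\<lambda>m. m - i" "\<lambda>x. i + x"]) auto
      finally show ?thesis .
    qed
    have "b i = F i" if "i < n" for i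
      using that
    proof (induction "n - i" arbitrary: i rule: less_induct)
      case less
      have "b i = delta a n (n - i) / (lam n - lam i)
       + (\<Sum>m\<in>{Suc i..<n}. b m * delta a m (m - i) / (lam n - lam i))" using rec less.prems .
      also have "(\<Sum>m\<in>{Suc i..<n}. b m * delta a m (m - i) / (lam n - lam i))
          = (\<Sum>m\<in>{Suc i..<n}. F m * delta a m (m - i) / (lam n - lam i))"
        by (rule sum.cong[OF refl]) (subst less.hyps, auto)
      finally show ?case using Frec less.prems by simp
    qed
    then show "\<forall>i<n. coeff (P n) i =
           (\<Sum>xs\<in>compositions (n - i).
              \<Prod>s<length xs. delta a (i + sum_list (take (Suc s) xs)) (xs ! s)
                              / (lam n - lam (i + sum_list (take s xs))))"
      by (simp add: b_def F_def Tm_def)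
  qed
qed

end
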